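(* Let $r_2$ be an admissible trajectory, and let $G$, $\tau$, $T$, $e$ be as in the context. Let $G_1=\mathbb R\times(0,\infty)\times S_2$ where $S_2=\{r\in\mathbb R^3:|r|=1\}$, regarded as a $C^\infty$ manifold. Then the map $\phi:G\to G_1$, $\phi(r_1,t)=(\tau(r_1,t),T(r_1,t),e(r_1,t))$, is a bijection of $G$ onto $G_1$ with inverse $\psi(\tau,T,e)=(r_2(\tau)+Te,\ \tau+T)$, and $\phi$ is a diffeomorphism of class $C^1$. If $r_2$ is of class $C^\infty$, then $\phi$ is a $C^\infty$ diffeomorphism.
   Context: Units with $c=1$. A function $r_2:\mathbb R\to\mathbb R^3$ is an admissible trajectory if it has continuous derivatives up to order 3, $|\dot r_2(t)|<1$ for all $t$, and for every $t_1$ one has $\sup_{u\le t_1}|\dot r_2(u)|<1$ and $\sup_{u\le t_1}|\ddot r_2(u)|<\infty$. For $(r_1,t)\in\mathbb R^3\times\mathbb R$, the retarded time $\tau(r_1,t)$ is the unique $\tau\le t$ with $\tau=t-|r_1-r_2(\tau)|$; the delay is $T=t-\tau$; $G=\{(r_1,t)\in\mathbb R^3\times\mathbb R:T(r_1,t)>0\}$ is the open set of events not on the trajectory; on $G$, $e=(r_1-r_2(\tau))/T$. *)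

theory Defs
  imports "HOL-Analysis.Analysis"
begin

text \<open>D ds is the iterated partial derivative along the directions in the list ds
  (the head of the list being the last derivative taken).\<close>
definition Ck_on :: "nat \<Rightarrow> ('a::euclidean_space \<Rightarrow> 'b::real_normed_vector) \<Rightarrow> 'a set \<Rightarrow> bool" where
  "Ck_on k f S \<longleftrightarrow>
     (\<exists>D :: 'a list \<Rightarrow> 'a \<Rightarrow> 'b.
        (\<forall>x\<in>S. D [] x = f x) \<and>
        (\<forall>ds. length ds \<le> k \<and> set ds \<subseteq> Basis \<longrightarrow> continuous_on S (D ds)) \<and>
        (\<forall>ds i. length ds < k \<and> set ds \<subseteq> Basis \<and> i \<in> Basis \<longrightarrow>
           (\<forall>x\<in>S. ((\<lambda>s. D ds (x + s *\<^sub>R i)) has_vector_derivative D (i # ds) x) (at 0))))"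

definition Cinf_on :: "('a::euclidean_space \<Rightarrow> 'b::real_normed_vector) \<Rightarrow> 'a set \<Rightarrow> bool" where
  "Cinf_on f S \<longleftrightarrow> (\<forall>k. Ck_on k f S)"

definition vel :: "(real \<Rightarrow> real^3) \<Rightarrow> real \<Rightarrow> real^3" where
  "vel r2 u = vector_derivative r2 (at u)"

definition acc :: "(real \<Rightarrow> real^3) \<Rightarrow> real \<Rightarrow> real^3" where
  "acc r2 u = vector_derivative (vel r2) (at u)"

definition admissible :: "(real \<Rightarrow> real^3) \<Rightarrow> bool" where
  "admissible r2 \<longleftrightarrow>
     Ck_on 3 r2 UNIV \<and>
     (\<forall>t. norm (vel r2 t) < 1) \<and>
     (\<forall>t1. bdd_above ((\<lambda>u. norm (vel r2 u)) ` {..t1}) \<and>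
           (SUP u\<in>{..t1}. norm (vel r2 u)) < 1) \<and>
     (\<forall>t1. bdd_above ((\<lambda>u. norm (acc r2 u)) ` {..t1}))"

definition ret_time :: "(real \<Rightarrow> real^3) \<Rightarrow> real^3 \<Rightarrow> real \<Rightarrow> real" where
  "ret_time r2 r1 t = (THE \<tau>. \<tau> \<le> t \<and> \<tau> = t - norm (r1 - r2 \<tau>))"

definition delay :: "(real \<Rightarrow> real^3) \<Rightarrow> real^3 \<Rightarrow> real \<Rightarrow> real" where
  "delay r2 r1 t = t - ret_time r2 r1 t"

definition Gset :: "(real \<Rightarrow> real^3) \<Rightarrow> ((real^3) \<times> real) set" where
  "Gset r2 = {(r1, t). delay r2 r1 t > 0}"

definition edir :: "(real \<Rightarrow> real^3) \<Rightarrow> real^3 \<Rightarrow> real \<Rightarrow> real^3" where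
  "edir r2 r1 t = (1 / delay r2 r1 t) *\<^sub>R (r1 - r2 (ret_time r2 r1 t))"

definition G1 :: "(real \<times> real \<times> (real^3)) set" where
  "G1 = {(\<tau>, T, e). T > 0 \<and> norm e = 1}"

definition phi :: "(real \<Rightarrow> real^3) \<Rightarrow> (real^3) \<times> real \<Rightarrow> real \<times> real \<times> (real^3)" where
  "phi r2 = (\<lambda>(r1, t). (ret_time r2 r1 t, delay r2 r1 t, edir r2 r1 t))"

definition psi :: "(real \<Rightarrow> real^3) \<Rightarrow> real \<times> real \<times> (real^3) \<Rightarrow> (real^3) \<times> real" where
  "psi r2 = (\<lambda>(\<tau>, T, e). (r2 \<tau> + T *\<^sub>R e, \<tau> + T))"

definition Ck_on_sub :: "nat \<Rightarrow> ('a::euclidean_space \<Rightarrow> 'b::real_normed_vector) \<Rightarrow> 'a set \<Rightarrow> bool" where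
  "Ck_on_sub k f M \<longleftrightarrow> (\<exists>U g. open U \<and> M \<subseteq> U \<and> Ck_on k g U \<and> (\<forall>x\<in>M. g x = f x))"

definition Cinf_on_sub :: "('a::euclidean_space \<Rightarrow> 'b::real_normed_vector) \<Rightarrow> 'a set \<Rightarrow> bool" where
  "Cinf_on_sub f M \<longleftrightarrow> (\<exists>U g. open U \<and> M \<subseteq> U \<and> Cinf_on g U \<and> (\<forall>x\<in>M. g x = f x))"

end

theory Submission
  imports Defs
begin

fun Cf :: "nat \<Rightarrow> ('a::euclidean_space \<Rightarrow> 'b::real_normed_vector) \<Rightarrow> 'a set \<Rightarrow> bool" where
  "Cf 0 f S = continuous_on S f"
| "Cf (Suc k) f S = (\<exists>f'. (\<forall>x\<in>S. (f has_derivative f' x) (at x)) \<and> (\<forall>i\<in>Basis. Cf k (\<lambda>x. f' x i) S))"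

lemma Cf_cont: "Cf k f S \<Longrightarrow> continuous_on S f"
proof (cases k)
  case (Suc m)
  assume "Cf k f S"
  then obtain f' where "\<forall>x\<in>S. (f has_derivative f' x) (at x)" using Suc by auto
  then show ?thesis
    by (meson continuous_at_imp_continuous_on has_derivative_continuous)
qed simp

lemma Cf_mono: "Cf (Suc k) f S \<Longrightarrow> Cf k f S"
proof (induction k arbitrary: f)
  case 0
  show ?case by (simp only: Cf.simps(1)) (rule Cf_cont[OF "0.prems"])
next
  case (Suc k)
  then obtain f' where "\<forall>x\<in>S. (f has_derivative f' x) (at x)" "\<forall>i\<in>Basis. Cf (Suc k) (\<lambda>x. f' x i) S"
    by (simp only: Cf.simps) blast
  then show ?case using Suc.IH by (simp only: Cf.simps) blast
qed

lemma Cf_le: "m \<le> k \<Longrightarrow> Cf k f S \<Longrightarrow> Cf m f S"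
proof (induction k rule: dec_induct)
  case base
  then show ?case .
next
  case (step n)
  then show ?case using Cf_mono by blast
qed

lemma Cf_const: "Cf k (\<lambda>x. c) S"
proof (induction k arbitrary: c)
  case 0
  then show ?case by simp
next
  case (Suc k)
  show ?case
    by (simp only: Cf.simps) (rule exI[of _ "\<lambda>x h. 0"], auto intro: Suc.IH)
qed

lemma Cf_id: "Cf k (\<lambda>x. x) S"
proof (cases k)
  case 0
  then show ?thesis by (simp add: continuous_on_id)
next
  case (Suc m)
  show ?thesis unfolding Suc
    by (simp only: Cf.simps) (rule exI[of _ "\<lambda>x h. h"], auto intro: Cf_const)
qed

lemma Cf_add: "Cf k f S \<Longrightarrow> Cf k g S \<Longrightarrow> Cf k (\<lambda>x. f x + g x) S"
proof (induction k arbitrary: f g)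
  case 0
  then show ?case by (simp add: continuous_on_add)
next
  case (Suc k)
  obtain f' where f': "\<forall>x\<in>S. (f has_derivative f' x) (at x)" "\<forall>i\<in>Basis. Cf k (\<lambda>x. f' x i) S"
    using Suc.prems(1) by (simp only: Cf.simps) blast
  obtain g' where g': "\<forall>x\<in>S. (g has_derivative g' x) (at x)" "\<forall>i\<in>Basis. Cf k (\<lambda>x. g' x i) S"
    using Suc.prems(2) by (simp only: Cf.simps) blast
  show ?case
    apply (simp only: Cf.simps)
    apply (rule exI[of _ "\<lambda>x h. f' x h + g' x h"])
    using f' g' Suc.IH by (auto intro: has_derivative_add)
qed

lemma Cf_linear: "bounded_linear L \<Longrightarrow> Cf k f S \<Longrightarrow> Cf k (\<lambda>x. L (f x)) S"
proof (induction k arbitrary: f)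
  case 0
  then show ?case using bounded_linear.continuous_on[of L S f] by simp
next
  case (Suc k)
  obtain f' where f': "\<forall>x\<in>S. (f has_derivative f' x) (at x)" "\<forall>i\<in>Basis. Cf k (\<lambda>x. f' x i) S"
    using Suc.prems(2) by (simp only: Cf.simps) blast
  show ?case
    apply (simp only: Cf.simps)
    apply (rule exI[of _ "\<lambda>x h. L (f' x h)"])
    using f' Suc.IH Suc.prems(1) by (auto intro: bounded_linear.has_derivative)
qed

lemma Cf_bilinear:
  assumes "bounded_bilinear pr"
  shows "Cf k a S \<Longrightarrow> Cf k b S \<Longrightarrow> Cf k (\<lambda>x. pr (a x) (b x)) S"
proof (induction k arbitrary: a b)
  case 0
  then show ?case using bounded_bilinear.continuous_on[OF assms] by simp
next
  case (Suc k)
  obtain a' where a': "\<forall>x\<in>S. (a has_derivative a' x) (at x)" "\<forall>i\<in>Basis. Cf k (\<lambda>x. a' x i) S"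
    using Suc.prems(1) by (simp only: Cf.simps) blast
  obtain b' where b': "\<forall>x\<in>S. (b has_derivative b' x) (at x)" "\<forall>i\<in>Basis. Cf k (\<lambda>x. b' x i) S"
    using Suc.prems(2) by (simp only: Cf.simps) blast
  have ak: "Cf k a S" "Cf k b S" using Suc.prems Cf_mono by blast+
  show ?case
    apply (simp only: Cf.simps)
    apply (rule exI[of _ "\<lambda>x h. pr (a x) (b' x h) + pr (a' x h) (b x)"])
    using a' b' Suc.IH ak by (auto intro!: bounded_bilinear.FDERIV[OF assms] Cf_add)
qed

lemma Cf_scaleR: "Cf k a S \<Longrightarrow> Cf k b S \<Longrightarrow> Cf k (\<lambda>x. a x *\<^sub>R b x) S"
  by (rule Cf_bilinear[OF bounded_bilinear_scaleR])

lemma Cf_inner: "Cf k a S \<Longrightarrow> Cf k b S \<Longrightarrow> Cf k (\<lambda>x. a x \<bullet> b x) S"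
  by (rule Cf_bilinear[OF bounded_bilinear_inner])

lemma Cf_mult: "Cf k (a::_\<Rightarrow>real) S \<Longrightarrow> Cf k b S \<Longrightarrow> Cf k (\<lambda>x. a x * b x) S"
  by (rule Cf_bilinear[OF bounded_bilinear_mult])

lemma Cf_minus: "Cf k f S \<Longrightarrow> Cf k g S \<Longrightarrow> Cf k (\<lambda>x. f x - g x) S"
proof -
  assume "Cf k f S" "Cf k g S"
  then have "Cf k (\<lambda>x. f x + (-1) *\<^sub>R g x) S" by (intro Cf_add Cf_scaleR Cf_const)
  then show ?thesis by simp
qed

lemma Cf_sum: "finite A \<Longrightarrow> (\<And>j. j \<in> A \<Longrightarrow> Cf k (F j) S) \<Longrightarrow> Cf k (\<lambda>x. \<Sum>j\<in>A. F j x) S"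
proof (induction A rule: finite_induct)
  case empty
  then show ?case by (simp add: Cf_const)
next
  case (insert a A)
  then show ?case by (simp add: Cf_add)
qed

lemma Cf_compose:
  fixes f :: "'a::euclidean_space \<Rightarrow> 'b::euclidean_space" and g :: "'b \<Rightarrow> 'c::real_normed_vector"
  shows "Cf k g T \<Longrightarrow> Cf k f S \<Longrightarrow> f ` S \<subseteq> T \<Longrightarrow> Cf k (\<lambda>x. g (f x)) S"
proof (induction k arbitrary: f g)
  case 0
  then show ?case by (auto intro: continuous_on_compose2)
next
  case (Suc k)
  obtain g' where g': "\<forall>x\<in>T. (g has_derivative g' x) (at x)" "\<forall>i\<in>Basis. Cf k (\<lambda>x. g' x i) T"
    using Suc.prems(1) by (simp only: Cf.simps) blast
  obtain f' where f': "\<forall>x\<in>S. (f has_derivative f' x) (at x)" "\<forall>i\<in>Basis. Cf k (\<lambda>x. f' x i) S"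
    using Suc.prems(2) by (simp only: Cf.simps) blast
  have fk: "Cf k f S" using Suc.prems Cf_mono by blast
  have eq: "g' (f x) v = (\<Sum>j\<in>Basis. (v \<bullet> j) *\<^sub>R g' (f x) j)" if x: "x \<in> S" for x v
  proof -
    have lin: "linear (g' (f x))" using g' x Suc.prems(3)
      by (meson has_derivative_linear image_subset_iff)
    have "g' (f x) v = g' (f x) (\<Sum>j\<in>Basis. (v \<bullet> j) *\<^sub>R j)"
      by (simp add: euclidean_representation)
    also have "\<dots> = (\<Sum>j\<in>Basis. (v \<bullet> j) *\<^sub>R g' (f x) j)"
      using lin by (simp add: linear_sum linear_scale)
    finally show ?thesis .
  qed
  show ?case
  proof (simp only: Cf.simps, rule exI[of _ "\<lambda>x h. \<Sum>j\<in>Basis. (f' x h \<bullet> j) *\<^sub>R g' (f x) j"], intro conjI ballI)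
    fix x assume x: "x \<in> S"
    have "((\<lambda>x. g (f x)) has_derivative (\<lambda>h. g' (f x) (f' x h))) (at x)"
      using diff_chain_at[of f "f' x" x g "g' (f x)"] f' g' x Suc.prems(3)
      by (auto simp: o_def)
    then show "((\<lambda>x. g (f x)) has_derivative (\<lambda>h. \<Sum>j\<in>Basis. (f' x h \<bullet> j) *\<^sub>R g' (f x) j)) (at x)"
      by (rule has_derivative_eq_rhs) (rule ext, rule eq[OF x])
  next
    fix i :: 'a assume i: "i \<in> Basis"
    show "Cf k (\<lambda>x. \<Sum>j\<in>Basis. (f' x i \<bullet> j) *\<^sub>R g' (f x) j) S"
      apply (rule Cf_sum, simp)
      apply (rule Cf_scaleR)
       apply (rule Cf_inner) using f' i apply blast apply (rule Cf_const)
      apply (rule Suc.IH) using g' fk Suc.prems(3) by auto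
  qed
qed


lemma Cf_inverse_real: "Cf k (\<lambda>y::real. inverse y) {y. y \<noteq> 0}"
proof (induction k)
  case 0
  then show ?case by (simp add: continuous_on_inverse continuous_on_id)
next
  case (Suc k)
  show ?case
  proof (simp only: Cf.simps, rule exI[of _ "\<lambda>y h. - (inverse y * h * inverse y)"], intro conjI ballI)
    fix x :: real assume "x \<in> {y. y \<noteq> 0}"
    then show "(inverse has_derivative (\<lambda>h. - (inverse x * h * inverse x))) (at x)"
      by (intro has_derivative_inverse') simp
  next
    fix i :: real assume "i \<in> Basis"
    then have i: "i = 1" by simp
    have "Cf k (\<lambda>y. - 1 *\<^sub>R (inverse y * inverse y)) {y::real. y \<noteq> 0}"
      by (intro Cf_scaleR Cf_const Cf_mult Suc.IH)
    then show "Cf k (\<lambda>y. - (inverse y * i * inverse y)) {y. y \<noteq> 0}"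
      by (simp add: i)
  qed
qed

lemma Cf_inverse: "Cf k (f::_\<Rightarrow>real) S \<Longrightarrow> (\<And>x. x \<in> S \<Longrightarrow> f x \<noteq> 0) \<Longrightarrow> Cf k (\<lambda>x. inverse (f x)) S"
  by (rule Cf_compose[OF Cf_inverse_real]) auto

lemma Cf_pair: assumes A: "Cf k a S" and B: "Cf k b S" shows "Cf k (\<lambda>x. (a x, b x)) S"
proof -
  have "Cf k (\<lambda>x. (a x, 0) + (0, b x)) S"
    apply (rule Cf_add)
     apply (rule Cf_linear[where L="\<lambda>u. (u, 0)" and f=a])
      apply (simp add: bounded_linear_Pair bounded_linear_zero bounded_linear_ident, rule A)
    apply (rule Cf_linear[where L="\<lambda>u. (0, u)" and f=b])
     apply (simp add: bounded_linear_Pair bounded_linear_zero bounded_linear_ident, rule B)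
    done
  then show ?thesis by simp
qed

lemma Cf_fst: "Cf k (\<lambda>x. fst x) S"
  using Cf_linear[OF bounded_linear_fst Cf_id] .

lemma Cf_snd: "Cf k (\<lambda>x. snd x) S"
  using Cf_linear[OF bounded_linear_snd Cf_id] .

lemma Cf_Ck: "open S \<Longrightarrow> Cf k f S \<Longrightarrow> Ck_on k f S"
proof (induction k arbitrary: f)
  case 0
  show ?case unfolding Ck_on_def
    by (rule exI[of _ "\<lambda>ds. f"]) (use "0.prems" in simp)
next
  case (Suc k)
  obtain f' where f': "\<forall>x\<in>S. (f has_derivative f' x) (at x)" "\<forall>i\<in>Basis. Cf k (\<lambda>x. f' x i) S"
    using Suc.prems(2) by (simp only: Cf.simps) blast
  have "\<forall>i. \<exists>D. i \<in> Basis \<longrightarrow> ((\<forall>x\<in>S. D [] x = f' x i) \<and>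
        (\<forall>ds. length ds \<le> k \<and> set ds \<subseteq> Basis \<longrightarrow> continuous_on S (D ds)) \<and>
        (\<forall>ds j. length ds < k \<and> set ds \<subseteq> Basis \<and> j \<in> Basis \<longrightarrow>
           (\<forall>x\<in>S. ((\<lambda>s. D ds (x + s *\<^sub>R j)) has_vector_derivative D (j # ds) x) (at 0))))"
    using Suc.IH[OF Suc.prems(1)] f'(2) unfolding Ck_on_def by blast
  then obtain DD where DD: "\<And>i. i \<in> Basis \<Longrightarrow> ((\<forall>x\<in>S. DD i [] x = f' x i) \<and>
        (\<forall>ds. length ds \<le> k \<and> set ds \<subseteq> Basis \<longrightarrow> continuous_on S (DD i ds)) \<and>
        (\<forall>ds j. length ds < k \<and> set ds \<subseteq> Basis \<and> j \<in> Basis \<longrightarrow>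
           (\<forall>x\<in>S. ((\<lambda>s. DD i ds (x + s *\<^sub>R j)) has_vector_derivative DD i (j # ds) x) (at 0))))"
    by metis
  define D where "D ds = (if ds = [] then f else DD (last ds) (butlast ds))" for ds
  have fc: "continuous_on S f" using Cf_cont Suc.prems(2) by blast
  show ?case unfolding Ck_on_def
  proof (rule exI[of _ D], intro conjI allI impI ballI)
    fix x show "D [] x = f x" by (simp add: D_def)
  next
    fix ds :: "'a list" assume a: "length ds \<le> Suc k \<and> set ds \<subseteq> Basis"
    show "continuous_on S (D ds)"
    proof (cases "ds = []")
      case True then show ?thesis using fc by (simp add: D_def)
    next
      case False
      then have "last ds \<in> Basis" using a by auto
      moreover have "length (butlast ds) \<le> k" "set (butlast ds) \<subseteq> Basis" using a
        by (auto dest: in_set_butlastD)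
      ultimately show ?thesis using DD False by (simp add: D_def)
    qed
  next
    fix ds :: "'a list" and i :: 'a and x assume a: "length ds < Suc k \<and> set ds \<subseteq> Basis \<and> i \<in> Basis"
      and x: "x \<in> S"
    show "((\<lambda>s. D ds (x + s *\<^sub>R i)) has_vector_derivative D (i # ds) x) (at 0)"
    proof (cases "ds = []")
      case True
      have d1: "((\<lambda>s. x + s *\<^sub>R i) has_derivative (\<lambda>s. s *\<^sub>R i)) (at 0)"
        by (auto intro!: derivative_eq_intros)
      have "((\<lambda>s. f (x + s *\<^sub>R i)) has_derivative (\<lambda>s. f' x (s *\<^sub>R i))) (at 0)"
        using diff_chain_at[OF d1, of f "f' x"] f'(1) x by (simp add: o_def)
      moreover have "f' x (s *\<^sub>R i) = s *\<^sub>R f' x i" for s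
        using f'(1) x by (meson has_derivative_linear linear_scale)
      ultimately have "((\<lambda>s. f (x + s *\<^sub>R i)) has_vector_derivative f' x i) (at 0)"
        by (simp add: has_vector_derivative_def)
      then show ?thesis using True DD a x by (simp add: D_def)
    next
      case False
      then have "last ds \<in> Basis" using a by auto
      moreover have "length (butlast ds) < k" using a False by (cases ds) auto
      moreover have "set (butlast ds) \<subseteq> Basis" using a False
        by (auto dest: in_set_butlastD)
      ultimately show ?thesis using DD[of "last ds"] False a x by (simp add: D_def)
    qed
  qed
qed

lemma Ck_Cf_real:
  fixes f :: "real \<Rightarrow> 'b::real_normed_vector"
  assumes "Ck_on K f UNIV"
  shows "Cf K f UNIV"
proof -
  obtain D where D: "\<forall>x. D [] x = f x"
    "\<forall>ds. length ds \<le> K \<and> set ds \<subseteq> Basis \<longrightarrow> continuous_on UNIV (D ds)"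
    "\<forall>ds i. length ds < K \<and> set ds \<subseteq> Basis \<and> i \<in> Basis \<longrightarrow>
           (\<forall>x. ((\<lambda>s. D ds (x + s *\<^sub>R i)) has_vector_derivative D (i # ds) x) (at 0))"
    using assms unfolding Ck_on_def by auto
  have "\<forall>ds. length ds + m \<le> K \<and> set ds \<subseteq> Basis \<longrightarrow> Cf m (D ds) UNIV" for m
  proof (induction m)
    case 0
    then show ?case using D(2) by simp
  next
    case (Suc m)
    show ?case
    proof (intro allI impI)
      fix ds :: "real list" assume a: "length ds + Suc m \<le> K \<and> set ds \<subseteq> Basis"
      have dv: "(D ds has_vector_derivative D (1 # ds) x) (at x)" for x
      proof -
        have "((\<lambda>s. D ds (x + s)) has_vector_derivative D (1 # ds) x) (at 0)"
          using D(3) a by auto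
        then have h2: "((\<lambda>s. D ds (x + s)) has_vector_derivative D (1 # ds) x) (at ((\<lambda>y. y - x) x))"
          by simp
        have h1: "((\<lambda>y. y - x) has_vector_derivative 1) (at x)"
          unfolding has_vector_derivative_def by (auto intro!: derivative_eq_intros)
        from vector_diff_chain_at[OF h1 h2] show ?thesis by (simp add: o_def)
      qed
      have ih: "Cf m (D (1 # ds)) UNIV" using Suc.IH a by auto
      show "Cf (Suc m) (D ds) UNIV"
        apply (simp only: Cf.simps)
        apply (rule exI[of _ "\<lambda>x h. h *\<^sub>R D (1 # ds) x"])
        using dv ih by (auto simp: has_vector_derivative_def)
    qed
  qed
  from this[of K] have "Cf K (D []) UNIV" by simp
  moreover have "D [] = f" using D(1) by auto
  ultimately show ?thesis by simp
qed


lemma Cf_vd: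
  fixes f :: "real \<Rightarrow> 'b::real_normed_vector"
  assumes "Cf (Suc k) f UNIV"
  shows "Cf k (\<lambda>x. vector_derivative f (at x)) UNIV"
proof -
  obtain f' where f': "\<forall>x. (f has_derivative f' x) (at x)" "Cf k (\<lambda>x. f' x 1) UNIV"
    using assms by (simp only: Cf.simps) auto
  have "vector_derivative f (at x) = f' x 1" for x
  proof -
    have lin: "linear (f' x)" using f'(1) has_derivative_linear by blast
    have "f' x h = h *\<^sub>R f' x 1" for h
      using linear_scale[OF lin, of h 1] by (simp only: real_scaleR_def mult_1_right)
    then have e: "(\<lambda>h. h *\<^sub>R f' x 1) = f' x" by (intro ext) (rule sym)
    have "(f has_vector_derivative f' x 1) (at x)"
      unfolding has_vector_derivative_def e using f'(1) by blast
    then show ?thesis by (rule vector_derivative_at)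
  qed
  then show ?thesis using f'(2) by simp
qed

context
  fixes r2 :: "real \<Rightarrow> real^3"
  assumes adm: "admissible r2"
begin

lemma C3: "Cf 3 r2 UNIV"
  using adm unfolding admissible_def by (auto intro: Ck_Cf_real)

lemma r2_vd: "(r2 has_vector_derivative vel r2 x) (at x)"
proof -
  obtain f' where f': "\<forall>x. (r2 has_derivative f' x) (at x)"
    using C3 by (simp only: numeral_3_eq_3 Cf.simps) auto
  then have "r2 differentiable (at x)" by (auto simp: differentiable_def)
  then show ?thesis unfolding vel_def
    by (simp add: vector_derivative_works)
qed

lemma r2_cont: "continuous_on UNIV r2"
  using Cf_cont[OF C3] .

definition cc :: "real \<Rightarrow> real" where
  "cc t1 = (SUP u\<in>{..t1}. norm (vel r2 u))"

lemma cc_lt: "cc t1 < 1"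
  using adm unfolding admissible_def cc_def by auto

lemma vel_le: "u \<le> t1 \<Longrightarrow> norm (vel r2 u) \<le> cc t1"
  unfolding cc_def using adm unfolding admissible_def
  by (intro cSUP_upper) auto

lemma lip: "s \<le> s' \<Longrightarrow> norm (r2 s' - r2 s) \<le> cc s' * (s' - s)"
proof -
  assume ss: "s \<le> s'"
  have "norm (r2 s' - r2 s) \<le> cc s' * norm (s' - s)"
  proof (rule differentiable_bound[of "{s..s'}" r2 "\<lambda>x h. h *\<^sub>R vel r2 x"])
    show "convex {s..s'}" by simp
    show "(r2 has_derivative (\<lambda>h. h *\<^sub>R vel r2 x)) (at x within {s..s'})" for x
      using r2_vd[of x] unfolding has_vector_derivative_def
      by (rule has_derivative_at_withinI)
    show "onorm (\<lambda>h. h *\<^sub>R vel r2 x) \<le> cc s'" if "x \<in> {s..s'}" for x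
      using vel_le[of x s'] that onorm_scaleR_left[OF bounded_linear_ident, of "vel r2 x"]
      by (simp add: onorm_id)
  qed (use ss in auto)
  then show ?thesis using ss by simp
qed

lemma strict: "s < s' \<Longrightarrow> norm (r2 s' - r2 s) < s' - s"
proof -
  assume "s < s'"
  then have A: "cc s' * (s' - s) < 1 * (s' - s)"
    using cc_lt[of s'] by (intro mult_strict_right_mono) auto
  have "norm (r2 s' - r2 s) \<le> cc s' * (s' - s)" using lip[of s s'] \<open>s < s'\<close> by simp
  also have "\<dots> < s' - s" using A by (simp only: mult_1)
  finally show ?thesis .
qed

definition Fr :: "real^3 \<Rightarrow> real \<Rightarrow> real \<Rightarrow> real" where
  "Fr r1 t s = s + norm (r1 - r2 s) - t"

lemma Fr_mono: "s < s' \<Longrightarrow> Fr r1 t s < Fr r1 t s'"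
proof -
  assume a: "s < s'"
  have "norm (r1 - r2 s) \<le> norm (r1 - r2 s') + norm (r2 s' - r2 s)"
    using norm_triangle_ineq[of "r1 - r2 s'" "r2 s' - r2 s"] by simp
  then show ?thesis using strict[OF a] unfolding Fr_def by simp
qed

lemma Fr_mono_le: "s \<le> s' \<Longrightarrow> Fr r1 t s \<le> Fr r1 t s'"
  using Fr_mono by (cases "s = s'") (auto simp: less_le)

lemma Fr_root: "\<exists>\<rho>. \<rho> \<le> t \<and> Fr r1 t \<rho> = 0"
proof -
  define s0 where "s0 = t - norm (r1 - r2 t) / (1 - cc t)"
  have pos: "1 - cc t > 0" using cc_lt by simp
  have s0t: "s0 \<le> t" unfolding s0_def using pos by simp
  have eq: "(1 - cc t) * (t - s0) = norm (r1 - r2 t)" unfolding s0_def using pos by simp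
  have "norm (r1 - r2 s0) \<le> norm (r1 - r2 t) + norm (r2 t - r2 s0)"
    using norm_triangle_ineq[of "r1 - r2 t" "r2 t - r2 s0"] by simp
  also have "\<dots> \<le> norm (r1 - r2 t) + cc t * (t - s0)" using lip[OF s0t] by simp
  finally have "Fr r1 t s0 \<le> 0" unfolding Fr_def using eq by (simp add: algebra_simps)
  moreover have "0 \<le> Fr r1 t t" unfolding Fr_def by simp
  moreover have "continuous_on {s0..t} (Fr r1 t)"
    unfolding Fr_def
    by (intro continuous_intros continuous_on_subset[OF r2_cont]) auto
  ultimately obtain \<rho> where "s0 \<le> \<rho>" "\<rho> \<le> t" "Fr r1 t \<rho> = 0"
    using IVT'[of "Fr r1 t" s0 0 t] s0t by auto
  then show ?thesis by auto
qed

lemma Fr_unique: "Fr r1 t a = 0 \<Longrightarrow> Fr r1 t b = 0 \<Longrightarrow> a = b"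
  using Fr_mono[of a b r1 t] Fr_mono[of b a r1 t] by (cases a b rule: linorder_cases) auto

lemma rt_char: "ret_time r2 r1 t = t - norm (r1 - r2 (ret_time r2 r1 t))"
  and rt_unique: "\<rho> = t - norm (r1 - r2 \<rho>) \<Longrightarrow> ret_time r2 r1 t = \<rho>"
proof -
  have ex: "\<exists>!\<tau>. \<tau> \<le> t \<and> \<tau> = t - norm (r1 - r2 \<tau>)"
  proof -
    obtain \<rho> where "\<rho> \<le> t" "Fr r1 t \<rho> = 0" using Fr_root by blast
    have iff: "Fr r1 t x = 0 \<longleftrightarrow> x = t - norm (r1 - r2 x)" for x
      unfolding Fr_def by auto
    show ?thesis
    proof (intro ex1I[of _ \<rho>])
      show "\<rho> \<le> t \<and> \<rho> = t - norm (r1 - r2 \<rho>)" using \<open>\<rho> \<le> t\<close> \<open>Fr r1 t \<rho> = 0\<close> iff by blast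
      fix y assume "y \<le> t \<and> y = t - norm (r1 - r2 y)"
      then have "Fr r1 t y = 0" using iff by blast
      then show "y = \<rho>" using Fr_unique \<open>Fr r1 t \<rho> = 0\<close> by blast
    qed
  qed
  have th: "ret_time r2 r1 t \<le> t \<and> ret_time r2 r1 t = t - norm (r1 - r2 (ret_time r2 r1 t))"
    unfolding ret_time_def by (rule theI'[OF ex])
  then show "ret_time r2 r1 t = t - norm (r1 - r2 (ret_time r2 r1 t))" by simp
  assume "\<rho> = t - norm (r1 - r2 \<rho>)"
  moreover then have "\<rho> \<le> t" using norm_ge_zero[of "r1 - r2 \<rho>"] by linarith
  ultimately show "ret_time r2 r1 t = \<rho>" using ex th by blast
qed


definition tau :: "(real^3) \<times> real \<Rightarrow> real" where
  "tau x = ret_time r2 (fst x) (snd x)"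

lemma Fr_tau: "Fr (fst x) (snd x) (tau x) = 0"
  using rt_char[of "fst x" "snd x"] unfolding Fr_def tau_def by linarith

lemma Fr_perturb: "\<bar>Fr r1' t' s - Fr r1 t s\<bar> \<le> norm (r1' - r1) + \<bar>t' - t\<bar>"
proof -
  have "\<bar>norm (r1' - r2 s) - norm (r1 - r2 s)\<bar> \<le> norm ((r1' - r2 s) - (r1 - r2 s))"
    by (rule norm_triangle_ineq3)
  then have "\<bar>norm (r1' - r2 s) - norm (r1 - r2 s)\<bar> \<le> norm (r1' - r1)" by simp
  then show ?thesis unfolding Fr_def by linarith
qed

lemma tau_cont: "continuous (at y) tau"
  unfolding continuous_at_eps_delta
proof (intro allI impI)
  fix \<epsilon> :: real assume ep: "\<epsilon> > 0"
  define t0 where "t0 = tau y"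
  have p: "Fr (fst y) (snd y) (t0 + \<epsilon>) > 0"
    using Fr_mono[of t0 "t0 + \<epsilon>" "fst y" "snd y"] Fr_tau[of y] ep unfolding t0_def by simp
  have n: "Fr (fst y) (snd y) (t0 - \<epsilon>) < 0"
    using Fr_mono[of "t0 - \<epsilon>" t0 "fst y" "snd y"] Fr_tau[of y] ep unfolding t0_def by simp
  define m where "m = min (Fr (fst y) (snd y) (t0 + \<epsilon>)) (- Fr (fst y) (snd y) (t0 - \<epsilon>))"
  have m: "m > 0" using p n unfolding m_def by simp
  show "\<exists>d>0. \<forall>x'. dist x' y < d \<longrightarrow> dist (tau x') (tau y) < \<epsilon>"
  proof (intro exI[of _ "m/2"] conjI allI impI)
    show "m / 2 > 0" using m by simp
    fix x' assume d: "dist x' y < m / 2"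
    have d1: "norm (fst x' - fst y) < m / 2" using dist_fst_le[of x' y] d by (simp add: dist_norm)
    have d2: "\<bar>snd x' - snd y\<bar> < m / 2" using dist_snd_le[of x' y] d by (simp add: dist_real_def)
    have pert: "\<bar>Fr (fst x') (snd x') s - Fr (fst y) (snd y) s\<bar> < m" for s
      using Fr_perturb[of "fst x'" "snd x'" s "fst y" "snd y"] d1 d2 by linarith
    have p': "Fr (fst x') (snd x') (t0 + \<epsilon>) > 0"
      using pert[of "t0 + \<epsilon>"] unfolding m_def by (simp add: abs_less_iff)
    have n': "Fr (fst x') (snd x') (t0 - \<epsilon>) < 0"
      using pert[of "t0 - \<epsilon>"] unfolding m_def by (simp add: abs_less_iff)
    have z: "Fr (fst x') (snd x') (tau x') = 0" by (rule Fr_tau)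
    have "tau x' < t0 + \<epsilon>"
    proof (rule ccontr)
      assume "\<not> tau x' < t0 + \<epsilon>"
      then have "Fr (fst x') (snd x') (t0 + \<epsilon>) \<le> Fr (fst x') (snd x') (tau x')"
        by (intro Fr_mono_le) simp
      then show False using p' z by simp
    qed
    moreover have "tau x' > t0 - \<epsilon>"
    proof (rule ccontr)
      assume "\<not> tau x' > t0 - \<epsilon>"
      then have "Fr (fst x') (snd x') (tau x') \<le> Fr (fst x') (snd x') (t0 - \<epsilon>)"
        by (intro Fr_mono_le) simp
      then show False using n' z by simp
    qed
    ultimately show "dist (tau x') (tau y) < \<epsilon>"
      unfolding t0_def dist_real_def by linarith
  qed
qed

lemma delay_eq: "delay r2 r1 t = norm (r1 - r2 (ret_time r2 r1 t))"
  unfolding delay_def using rt_char[of r1 t] by linarith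

lemma G_iff: "(r1, t) \<in> Gset r2 \<longleftrightarrow> r1 \<noteq> r2 t"
proof
  assume "(r1, t) \<in> Gset r2"
  then have "delay r2 r1 t > 0" by (simp add: Gset_def)
  then show "r1 \<noteq> r2 t"
    using rt_unique[of t t r1] unfolding delay_def by auto
next
  assume a: "r1 \<noteq> r2 t"
  have "r1 \<noteq> r2 (ret_time r2 r1 t)"
  proof
    assume "r1 = r2 (ret_time r2 r1 t)"
    then have "ret_time r2 r1 t = t" using rt_char[of r1 t] by simp
    then show False using a \<open>r1 = r2 (ret_time r2 r1 t)\<close> by simp
  qed
  then show "(r1, t) \<in> Gset r2" unfolding Gset_def using delay_eq[of r1 t] by simp
qed

lemma G_eq: "Gset r2 = {x. fst x \<noteq> r2 (snd x)}"
  using G_iff by auto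

lemma open_G: "open (Gset r2)"
  unfolding G_eq
  by (rule open_Collect_neq) (auto intro!: continuous_intros continuous_on_compose2[OF r2_cont])

definition ee :: "(real^3) \<times> real \<Rightarrow> real^3" where
  "ee x = edir r2 (fst x) (snd x)"

lemma tau_deriv:
  assumes xG: "x \<in> Gset r2"
  shows "(tau has_derivative (\<lambda>h. (snd h - ee x \<bullet> fst h) * inverse (1 - ee x \<bullet> vel r2 (tau x)))) (at x)"
proof -
  define t0 where "t0 = tau x"
  define r1 where "r1 = fst x"
  define w where "w = r1 - r2 t0"
  define v where "v = vel r2 t0"
  define e where "e = sgn w"
  define den where "den = 1 - e \<bullet> v"
  have dl: "delay r2 (fst x) (snd x) = norm w"
    using delay_eq unfolding w_def r1_def t0_def tau_def by simp
  have "delay r2 (fst x) (snd x) > 0" using xG by (cases x) (simp add: Gset_def)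
  then have w0: "w \<noteq> 0" using dl by simp
  have ee: "ee x = e"
    unfolding ee_def edir_def e_def dl sgn_div_norm
    by (simp add: w_def r1_def t0_def tau_def divide_inverse_commute)
  have ne: "norm e = 1" unfolding e_def using w0 by (simp add: norm_sgn)
  have "\<bar>e \<bullet> v\<bar> \<le> norm e * norm v" by (rule Cauchy_Schwarz_ineq2)
  also have "\<dots> < 1" using ne adm unfolding admissible_def v_def by simp
  finally have den: "den > 0" unfolding den_def by linarith
  define \<Psi> :: "real \<times> (real^3) \<Rightarrow> (real^3) \<times> real" where
    "\<Psi> p = (snd p, fst p + norm (snd p - r2 (fst p)))" for p
  define \<Psi>' :: "real \<times> (real^3) \<Rightarrow> (real^3) \<times> real" where
    "\<Psi>' h = (snd h, fst h + (snd h - fst h *\<^sub>R v) \<bullet> e)" for h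
  define g :: "(real^3) \<times> real \<Rightarrow> real \<times> (real^3)" where "g z = (tau z, fst z)" for z
  define g' :: "(real^3) \<times> real \<Rightarrow> real \<times> (real^3)" where
    "g' k = ((snd k - e \<bullet> fst k) * inverse den, fst k)" for k
  have gx: "g x = (t0, r1)" unfolding g_def t0_def r1_def by simp
  have r2d: "(r2 has_derivative (\<lambda>h. h *\<^sub>R v)) (at (fst (t0, r1)))"
    using r2_vd[of t0] unfolding v_def has_vector_derivative_def by simp
  have d1: "((\<lambda>p. r2 (fst p)) has_derivative (\<lambda>h. fst h *\<^sub>R v)) (at (t0, r1))"
    using has_derivative_compose[OF has_derivative_fst[OF has_derivative_ident] r2d] by simp
  have d2: "((\<lambda>p. snd p - r2 (fst p)) has_derivative (\<lambda>h. snd h - fst h *\<^sub>R v)) (at (t0, r1))"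
    by (rule has_derivative_diff[OF has_derivative_snd[OF has_derivative_ident] d1])
  have nd: "(norm has_derivative (\<lambda>h. h \<bullet> e)) (at ((\<lambda>p. snd p - r2 (fst p)) (t0, r1)))"
    using has_derivative_norm[OF w0] unfolding e_def w_def by simp
  have d3: "((\<lambda>p. norm (snd p - r2 (fst p))) has_derivative (\<lambda>h. (snd h - fst h *\<^sub>R v) \<bullet> e)) (at (t0, r1))"
    using has_derivative_compose[OF d2 nd] by simp
  have dPsi: "(\<Psi> has_derivative \<Psi>') (at (g x))"
    unfolding gx \<Psi>_def \<Psi>'_def
    by (intro has_derivative_Pair has_derivative_add d3 has_derivative_snd[OF has_derivative_ident]
        has_derivative_fst[OF has_derivative_ident])
  have lin: "linear g'"
    unfolding g'_def by (rule linearI) (auto simp: algebra_simps inner_add_right inner_scaleR_right)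
  have bl: "bounded_linear g'" using lin by (simp add: linear_conv_bounded_linear)
  have comp: "g' \<circ> \<Psi>' = id"
  proof
    fix h :: "real \<times> (real^3)"
    have "(fst h + (snd h - fst h *\<^sub>R v) \<bullet> e - e \<bullet> snd h) = fst h * den"
      unfolding den_def by (simp add: inner_diff_left inner_commute algebra_simps)
    then show "(g' \<circ> \<Psi>') h = id h"
      unfolding g'_def \<Psi>'_def using den by (simp add: prod_eq_iff)
  qed
  have contg: "continuous (at x) g"
    unfolding g_def by (intro continuous_Pair tau_cont continuous_fst continuous_ident)
  have fg: "\<Psi> (g z) = z" for z
    unfolding \<Psi>_def g_def tau_def using rt_char[of "fst z" "snd z"] by (simp add: prod_eq_iff)
  have "(g has_derivative g') (at x)"
    by (rule has_derivative_inverse_basic[OF dPsi bl comp contg open_UNIV UNIV_I fg])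
  then have "((\<lambda>z. fst (g z)) has_derivative (\<lambda>h. fst (g' h))) (at x)"
    by (rule has_derivative_fst)
  then show ?thesis
    unfolding g_def g'_def ee den_def v_def t0_def by simp
qed


lemma ee_eq: "ee = (\<lambda>x. inverse (snd x - tau x) *\<^sub>R (fst x - r2 (tau x)))"
  by (rule ext) (simp add: ee_def edir_def delay_def tau_def inverse_eq_divide)

lemma delay_pos: "x \<in> Gset r2 \<Longrightarrow> snd x - tau x > 0"
  by (cases x) (simp add: Gset_def delay_def tau_def)

lemma den_pos: "x \<in> Gset r2 \<Longrightarrow> 1 - ee x \<bullet> vel r2 (tau x) > 0"
proof -
  assume xG: "x \<in> Gset r2"
  have dl: "snd x - tau x = norm (fst x - r2 (tau x))"
    using delay_eq[of "fst x" "snd x"] unfolding delay_def tau_def by simp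
  then have "norm (fst x - r2 (tau x)) > 0" using delay_pos[OF xG] by simp
  then have ne: "norm (ee x) = 1" unfolding ee_eq dl by simp
  have "\<bar>ee x \<bullet> vel r2 (tau x)\<bar> \<le> norm (ee x) * norm (vel r2 (tau x))" by (rule Cauchy_Schwarz_ineq2)
  also have "\<dots> < 1" using ne adm unfolding admissible_def by simp
  finally show ?thesis by linarith
qed

lemma tau_Cf: assumes CK: "Cf K r2 UNIV" shows "Cf K tau (Gset r2)"
proof -
  have "k \<le> K \<Longrightarrow> Cf k tau (Gset r2)" for k
  proof (induction k)
    case 0
    then show ?case using tau_cont by (simp add: continuous_at_imp_continuous_on)
  next
    case (Suc k)
    have tk: "Cf k tau (Gset r2)" using Suc by simp
    have r2s: "Cf (Suc k) r2 UNIV" using Cf_le[OF Suc.prems CK] .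
    have r2k: "Cf k r2 UNIV" using Cf_mono[OF r2s] .
    have velk: "Cf k (vel r2) UNIV" using Cf_vd[OF r2s] unfolding vel_def[abs_def] .
    have r2t: "Cf k (\<lambda>x. r2 (tau x)) (Gset r2)" by (rule Cf_compose[OF r2k tk]) simp
    have velt: "Cf k (\<lambda>x. vel r2 (tau x)) (Gset r2)" by (rule Cf_compose[OF velk tk]) simp
    have dk: "Cf k (\<lambda>x. snd x - tau x) (Gset r2)" by (rule Cf_minus[OF Cf_snd tk])
    have eek: "Cf k ee (Gset r2)"
      unfolding ee_eq
      by (intro Cf_scaleR Cf_inverse[OF dk] Cf_minus[OF Cf_fst r2t]) (use delay_pos in force)
    have denk: "Cf k (\<lambda>x. inverse (1 - ee x \<bullet> vel r2 (tau x))) (Gset r2)"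
      by (intro Cf_inverse Cf_minus[OF Cf_const] Cf_inner[OF eek velt]) (use den_pos in force)
    show ?case
    proof (simp only: Cf.simps, rule exI[of _ "\<lambda>x h. (snd h - ee x \<bullet> fst h) * inverse (1 - ee x \<bullet> vel r2 (tau x))"], intro conjI ballI)
      fix x assume "x \<in> Gset r2"
      then show "(tau has_derivative (\<lambda>h. (snd h - ee x \<bullet> fst h) * inverse (1 - ee x \<bullet> vel r2 (tau x)))) (at x)"
        by (rule tau_deriv)
    next
      fix i :: "(real^3) \<times> real"
      show "Cf k (\<lambda>x. (snd i - ee x \<bullet> fst i) * inverse (1 - ee x \<bullet> vel r2 (tau x))) (Gset r2)"
        by (rule Cf_mult[OF Cf_minus[OF Cf_const Cf_inner[OF eek Cf_const]] denk])
    qed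
  qed
  then show ?thesis by simp
qed

lemma phi_eq: "phi r2 = (\<lambda>x. (tau x, snd x - tau x, ee x))"
  by (rule ext) (auto simp: phi_def delay_def tau_def ee_def)

lemma phi_Cf: assumes CK: "Cf K r2 UNIV" shows "Cf K (phi r2) (Gset r2)"
proof -
  have tk: "Cf K tau (Gset r2)" by (rule tau_Cf[OF CK])
  have r2t: "Cf K (\<lambda>x. r2 (tau x)) (Gset r2)" by (rule Cf_compose[OF CK tk]) simp
  have dk: "Cf K (\<lambda>x. snd x - tau x) (Gset r2)" by (rule Cf_minus[OF Cf_snd tk])
  have eek: "Cf K ee (Gset r2)"
    unfolding ee_eq
    by (intro Cf_scaleR Cf_inverse[OF dk] Cf_minus[OF Cf_fst r2t]) (use delay_pos in force)
  show ?thesis unfolding phi_eq by (intro Cf_pair tk dk eek)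
qed

lemma psi_eq: "psi r2 = (\<lambda>p. (r2 (fst p) + fst (snd p) *\<^sub>R snd (snd p), fst p + fst (snd p)))"
  by (rule ext) (auto simp: psi_def)

lemma psi_Cf: assumes CK: "Cf K r2 UNIV" shows "Cf K (psi r2) UNIV"
proof -
  have a: "Cf K (\<lambda>p::real \<times> real \<times> (real^3). fst (snd p)) UNIV"
    by (rule Cf_compose[of K "\<lambda>y. fst y" UNIV "\<lambda>x. snd x"]) (auto intro: Cf_fst Cf_snd)
  have b: "Cf K (\<lambda>p::real \<times> real \<times> (real^3). snd (snd p)) UNIV"
    by (rule Cf_compose[of K "\<lambda>y. snd y" UNIV "\<lambda>x. snd x"]) (auto intro: Cf_snd)
  have c: "Cf K (\<lambda>p::real \<times> real \<times> (real^3). r2 (fst p)) UNIV"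
    by (rule Cf_compose[OF CK Cf_fst]) simp
  show ?thesis unfolding psi_eq
    by (intro Cf_pair Cf_add c Cf_scaleR a b Cf_fst)
qed

lemma bij_parts:
  shows "\<forall>x\<in>Gset r2. psi r2 (phi r2 x) = x"
    and "\<forall>y\<in>G1. psi r2 y \<in> Gset r2 \<and> phi r2 (psi r2 y) = y"
    and "phi r2 ` Gset r2 \<subseteq> G1"
proof -
  show "\<forall>x\<in>Gset r2. psi r2 (phi r2 x) = x"
  proof
    fix x assume xG: "x \<in> Gset r2"
    have dl: "snd x - tau x = norm (fst x - r2 (tau x))"
      using delay_eq[of "fst x" "snd x"] unfolding delay_def tau_def by simp
    have pos: "norm (fst x - r2 (tau x)) > 0" using delay_pos[OF xG] dl by simp
    show "psi r2 (phi r2 x) = x"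
      unfolding phi_eq psi_eq ee_eq using pos dl by (simp add: prod_eq_iff)
  qed
  show "phi r2 ` Gset r2 \<subseteq> G1"
  proof
    fix y assume "y \<in> phi r2 ` Gset r2"
    then obtain x where xG: "x \<in> Gset r2" and y: "y = phi r2 x" by blast
    have dl: "snd x - tau x = norm (fst x - r2 (tau x))"
      using delay_eq[of "fst x" "snd x"] unfolding delay_def tau_def by simp
    have pos: "norm (fst x - r2 (tau x)) > 0" using delay_pos[OF xG] dl by simp
    show "y \<in> G1" unfolding y phi_eq G1_def ee_eq using pos dl by simp
  qed
  show "\<forall>y\<in>G1. psi r2 y \<in> Gset r2 \<and> phi r2 (psi r2 y) = y"
  proof
    fix y assume "y \<in> G1"
    then obtain s T e where y: "y = (s, T, e)" and T: "T > 0" and e: "norm e = 1"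
      unfolding G1_def by auto
    have rt: "ret_time r2 (r2 s + T *\<^sub>R e) (s + T) = s"
      by (rule rt_unique) (use T e in simp)
    have dl: "delay r2 (r2 s + T *\<^sub>R e) (s + T) = T" unfolding delay_def rt by simp
    show "psi r2 y \<in> Gset r2 \<and> phi r2 (psi r2 y) = y"
      unfolding y psi_def phi_def Gset_def edir_def using dl rt T by simp
  qed
qed

end


theorem mainTheorem7:
  fixes r2 :: "real \<Rightarrow> real^3"
  assumes "admissible r2"
  shows "bij_betw (phi r2) (Gset r2) G1
       \<and> (\<forall>x\<in>Gset r2. psi r2 (phi r2 x) = x)
       \<and> (\<forall>y\<in>G1. psi r2 y \<in> Gset r2 \<and> phi r2 (psi r2 y) = y)
       \<and> Ck_on 1 (phi r2) (Gset r2) \<and> Ck_on_sub 1 (psi r2) G1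
       \<and> (Cinf_on r2 UNIV \<longrightarrow> Cinf_on (phi r2) (Gset r2) \<and> Cinf_on_sub (psi r2) G1)"
proof -
  note bp = bij_parts[OF assms]
  have bij: "bij_betw (phi r2) (Gset r2) G1"
    by (rule bij_betw_byWitness[where f'="psi r2"]) (use bp in auto)
  have C1: "Cf 1 r2 UNIV" by (rule Cf_le[of 1 3, OF _ C3[OF assms]]) simp
  have p1: "Ck_on 1 (phi r2) (Gset r2)"
    by (rule Cf_Ck[OF open_G[OF assms] phi_Cf[OF assms C1]])
  have q1: "Ck_on_sub 1 (psi r2) G1"
    unfolding Ck_on_sub_def
    by (rule exI[of _ UNIV], rule exI[of _ "psi r2"]) (use Cf_Ck[OF open_UNIV psi_Cf[OF assms C1]] in blast)
  have inf: "Cinf_on (phi r2) (Gset r2) \<and> Cinf_on_sub (psi r2) G1" if ci: "Cinf_on r2 UNIV"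
  proof -
    have CK: "Cf K r2 UNIV" for K using ci unfolding Cinf_on_def by (auto intro: Ck_Cf_real)
    have "Cinf_on (phi r2) (Gset r2)" unfolding Cinf_on_def
      using Cf_Ck[OF open_G[OF assms] phi_Cf[OF assms CK]] by blast
    moreover have "Cinf_on_sub (psi r2) G1" unfolding Cinf_on_sub_def Cinf_on_def
      by (rule exI[of _ UNIV], rule exI[of _ "psi r2"]) (use Cf_Ck[OF open_UNIV psi_Cf[OF assms CK]] in blast)
    ultimately show ?thesis ..
  qed
  show ?thesis using bij bp p1 q1 inf by blast
qed

end
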